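(* Let $d\ge1$ and $k\ge d-1$ be integers. Then every injective function $f\colon\mathbb{R}^{k+1}\to\mathbb{R}^d$ satisfies $\alpha(f)\ge c_{d-1,k}$, and every injective function $f\colon S^k\to\mathbb{R}^d$ satisfies $\alpha(f)\ge c_{d-1,k}$ (functions not assumed continuous).
   Context: For a topological space $X$, $\mathrm{Conf}_2(X)=\{(x,y)\in X\times X: x\neq y\}$ with the subspace topology. Spheres carry the geodesic metric $d(u,v)=\arccos\langle u,v\rangle$. For a topological space $X$ and a metric space $Y$, $\delta(g)=\inf\{\delta\ge 0 : \text{for every } x\in X \text{ there is an open neighborhood } U_x \text{ of } x \text{ with } \operatorname{diam}(g(U_x))\le\delta\}$. For injective $f\colon X\to\mathbb{R}^d$, $\Phi_f(x,y)=\frac{f(x)-f(y)}{\|f(x)-f(y)\|}\in S^{d-1}$ and $\alpha(f)=\delta(\Phi_f)$. For a metric space $Y$ and $r\ge0$, $\mathrm{VR}(Y;r)$ is the Vietoris–Rips complex (simplices: finite subsets of diameter $\le r$), geometrically realized. For $k\ge n\ge0$, $c_{n,k}=\inf\{r\ge0:\text{there is a continuous } \mathbb{Z}/2\text{-equivariant map } S^k\to\mathrm{VR}(S^n;r)\}$, where $\mathbb{Z}/2$ acts antipodally on $S^k$ and on $\mathrm{VR}(S^n;r)$ via the antipodal map on vertices. *)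

theory Defs
  imports "HOL-Analysis.Analysis"
begin

definition sdist :: "'b::real_inner \<Rightarrow> 'b \<Rightarrow> real" where
  "sdist u v = arccos (u \<bullet> v)"

definition conf2 :: "'a topology \<Rightarrow> ('a \<times> 'a) topology" where
  "conf2 X = subtopology (prod_topology X X)
      {p. fst p \<in> topspace X \<and> snd p \<in> topspace X \<and> fst p \<noteq> snd p}"

text \<open>delta(g) for g from a topological space into a sphere with the geodesic metric;
  "diam (g U) <= d" is written out as: all pairwise distances are <= d.\<close>
definition modulus :: "'x topology \<Rightarrow> ('x \<Rightarrow> 'b::real_inner) \<Rightarrow> real" where
  "modulus X g = Inf {\<delta>. \<delta> \<ge> 0 \<and> (\<forall>x\<in>topspace X. \<exists>U. openin X U \<and> x \<in> U \<and>
       (\<forall>u\<in>U. \<forall>v\<in>U. sdist (g u) (g v) \<le> \<delta>))}"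

definition Phi :: "('a \<Rightarrow> 'b::real_normed_vector) \<Rightarrow> 'a \<times> 'a \<Rightarrow> 'b" where
  "Phi f p = (f (fst p) - f (snd p)) /\<^sub>R norm (f (fst p) - f (snd p))"

definition alpha :: "'a topology \<Rightarrow> ('a \<Rightarrow> 'b::real_inner) \<Rightarrow> real" where
  "alpha X f = modulus (conf2 X) (Phi f)"

text \<open>Geometric realization of the Vietoris--Rips complex VR(Y;r) of Y (a subset of a sphere,
  geodesic metric): points are finitely supported convex weight functions on Y whose support
  is a simplex (diameter <= r).  Topology: the weak (coherent) topology with respect to the
  closed simplices, each carrying its Euclidean topology (= subspace of the product topology
  on functions, since the support is a fixed finite set).\<close>
definition supp :: "('b \<Rightarrow> real) \<Rightarrow> 'b set" where
  "supp l = {y. l y \<noteq> 0}"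

definition is_simplex :: "'b::real_inner set \<Rightarrow> real \<Rightarrow> 'b set \<Rightarrow> bool" where
  "is_simplex Y r \<sigma> \<longleftrightarrow> finite \<sigma> \<and> \<sigma> \<noteq> {} \<and> \<sigma> \<subseteq> Y \<and> (\<forall>u\<in>\<sigma>. \<forall>v\<in>\<sigma>. sdist u v \<le> r)"

definition vr_carrier :: "'b::real_inner set \<Rightarrow> real \<Rightarrow> ('b \<Rightarrow> real) set" where
  "vr_carrier Y r = {l. (\<forall>y. l y \<ge> 0) \<and> is_simplex Y r (supp l) \<and> sum l (supp l) = 1}"

definition closed_simplex :: "'b::real_inner set \<Rightarrow> real \<Rightarrow> 'b set \<Rightarrow> ('b \<Rightarrow> real) set" where
  "closed_simplex Y r \<sigma> = {l \<in> vr_carrier Y r. supp l \<subseteq> \<sigma>}"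

definition vr_top :: "'b::real_inner set \<Rightarrow> real \<Rightarrow> ('b \<Rightarrow> real) topology" where
  "vr_top Y r = topology (\<lambda>U. U \<subseteq> vr_carrier Y r \<and>
     (\<forall>\<sigma>. is_simplex Y r \<sigma> \<longrightarrow>
        openin (subtopology (product_topology (\<lambda>_. euclideanreal) UNIV) (closed_simplex Y r \<sigma>))
               (U \<inter> closed_simplex Y r \<sigma>)))"

definition vr_antipode :: "('b::real_vector \<Rightarrow> real) \<Rightarrow> ('b \<Rightarrow> real)" where
  "vr_antipode l = (\<lambda>y. l (- y))"

text \<open>c(S, T) = inf of r >= 0 such that there is a continuous Z/2-equivariant map
  S \<rightarrow> VR(T; r); with S = S^k and T = S^n this is c_{n,k}.\<close>
definition c_VR :: "'a::real_normed_vector set \<Rightarrow> 'b::real_inner set \<Rightarrow> real" where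
  "c_VR S T = Inf {r. r \<ge> 0 \<and> (\<exists>g. continuous_map (subtopology euclidean S) (vr_top T r) g \<and>
        (\<forall>x\<in>S. g (- x) = vr_antipode (g x)))}"

end

theory Submission
  imports Defs
begin


definition vr_open :: "'b::real_inner set \<Rightarrow> real \<Rightarrow> ('b \<Rightarrow> real) set \<Rightarrow> bool" where
  "vr_open Y r = (\<lambda>U. U \<subseteq> vr_carrier Y r \<and>
     (\<forall>\<sigma>. is_simplex Y r \<sigma> \<longrightarrow>
        openin (subtopology (product_topology (\<lambda>_. euclideanreal) UNIV) (closed_simplex Y r \<sigma>))
               (U \<inter> closed_simplex Y r \<sigma>)))"

lemma istop_vr: "istopology (vr_open Y r)"
  unfolding istopology_def vr_open_def
proof (intro conjI allI impI)
  fix S T :: "('a \<Rightarrow> real) set"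
  assume S: "S \<subseteq> vr_carrier Y r \<and> (\<forall>\<sigma>. is_simplex Y r \<sigma> \<longrightarrow>
        openin (subtopology (product_topology (\<lambda>_. euclideanreal) UNIV) (closed_simplex Y r \<sigma>))
               (S \<inter> closed_simplex Y r \<sigma>))"
   and T: "T \<subseteq> vr_carrier Y r \<and> (\<forall>\<sigma>. is_simplex Y r \<sigma> \<longrightarrow>
        openin (subtopology (product_topology (\<lambda>_. euclideanreal) UNIV) (closed_simplex Y r \<sigma>))
               (T \<inter> closed_simplex Y r \<sigma>))"
  show "S \<inter> T \<subseteq> vr_carrier Y r" using S by blast
  fix \<sigma> assume "is_simplex Y r \<sigma>"
  then have "openin (subtopology (product_topology (\<lambda>_. euclideanreal) UNIV) (closed_simplex Y r \<sigma>))
               ((S \<inter> closed_simplex Y r \<sigma>) \<inter> (T \<inter> closed_simplex Y r \<sigma>))"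
    using S T by (intro openin_Int[of _ "S \<inter> closed_simplex Y r \<sigma>" "T \<inter> closed_simplex Y r \<sigma>"]) auto
  moreover have "(S \<inter> closed_simplex Y r \<sigma>) \<inter> (T \<inter> closed_simplex Y r \<sigma>) = S \<inter> T \<inter> closed_simplex Y r \<sigma>" by blast
  ultimately show "openin (subtopology (product_topology (\<lambda>_. euclideanreal) UNIV) (closed_simplex Y r \<sigma>))
               (S \<inter> T \<inter> closed_simplex Y r \<sigma>)" by simp
next
  fix K :: "('a \<Rightarrow> real) set set"
  assume K: "\<forall>S\<in>K. S \<subseteq> vr_carrier Y r \<and> (\<forall>\<sigma>. is_simplex Y r \<sigma> \<longrightarrow>
        openin (subtopology (product_topology (\<lambda>_. euclideanreal) UNIV) (closed_simplex Y r \<sigma>))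
               (S \<inter> closed_simplex Y r \<sigma>))"
  show "\<Union>K \<subseteq> vr_carrier Y r" using K by blast
  fix \<sigma> assume "is_simplex Y r \<sigma>"
  then have "openin (subtopology (product_topology (\<lambda>_. euclideanreal) UNIV) (closed_simplex Y r \<sigma>))
               (\<Union>((\<lambda>S. S \<inter> closed_simplex Y r \<sigma>) ` K))"
    using K by (intro openin_Union) auto
  moreover have "\<Union>((\<lambda>S. S \<inter> closed_simplex Y r \<sigma>) ` K) = \<Union>K \<inter> closed_simplex Y r \<sigma>" by blast
  ultimately show "openin (subtopology (product_topology (\<lambda>_. euclideanreal) UNIV) (closed_simplex Y r \<sigma>))
               (\<Union>K \<inter> closed_simplex Y r \<sigma>)" by simp
qed

lemma openin_vr: "openin (vr_top Y r) = vr_open Y r"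
  unfolding vr_top_def vr_open_def[symmetric] using istop_vr by (rule topology_inverse')

lemma cs_subset: "closed_simplex Y r \<sigma> \<subseteq> vr_carrier Y r"
  unfolding closed_simplex_def by blast

lemma carrier_open: "vr_open Y r (vr_carrier Y r)"
  unfolding vr_open_def
proof (intro conjI allI impI)
  fix \<sigma> assume "is_simplex Y r \<sigma>"
  have "vr_carrier Y r \<inter> closed_simplex Y r \<sigma> = closed_simplex Y r \<sigma>"
    using cs_subset by auto
  then show "openin (subtopology (product_topology (\<lambda>_. euclideanreal) UNIV) (closed_simplex Y r \<sigma>))
               (vr_carrier Y r \<inter> closed_simplex Y r \<sigma>)" by (simp add: openin_subtopology_refl)
qed auto

lemma topspace_vr: "topspace (vr_top Y r) = vr_carrier Y r"
proof
  show "topspace (vr_top Y r) \<subseteq> vr_carrier Y r"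
    unfolding topspace_def openin_vr vr_open_def by blast
  show "vr_carrier Y r \<subseteq> topspace (vr_top Y r)"
    using carrier_open[of Y r] openin_subset[of "vr_top Y r" "vr_carrier Y r"] by (simp add: openin_vr)
qed

lemma cs_closed:
  assumes "is_simplex Y r \<sigma>"
  shows "closedin (product_topology (\<lambda>_. euclideanreal) UNIV) (closed_simplex Y r \<sigma>)"
proof -
  let ?P = "product_topology (\<lambda>_::'a. euclideanreal) UNIV"
  have fin: "finite \<sigma>" using assms unfolding is_simplex_def by blast
  have eq: "closed_simplex Y r \<sigma> = \<Inter>({{l. l y \<in> {0..}} | y. True} \<union> {{l. l y \<in> {0}} | y. y \<notin> \<sigma>}
      \<union> {{l. (\<Sum>y\<in>\<sigma>. l y) \<in> {1}}})"
  proof (rule set_eqI, rule iffI)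
    fix l assume "l \<in> closed_simplex Y r \<sigma>"
    then have l: "\<forall>y. l y \<ge> 0" "supp l \<subseteq> \<sigma>" "sum l (supp l) = 1"
      unfolding closed_simplex_def vr_carrier_def by auto
    have "sum l \<sigma> = sum l (supp l)"
      by (rule sum.mono_neutral_right[OF fin l(2)]) (auto simp: supp_def)
    then show "l \<in> \<Inter>({{l. l y \<in> {0..}} | y. True} \<union> {{l. l y \<in> {0}} | y. y \<notin> \<sigma>}
      \<union> {{l. (\<Sum>y\<in>\<sigma>. l y) \<in> {1}}})" using l by (auto simp: supp_def)
  next
    fix l :: "'a \<Rightarrow> real" assume "l \<in> \<Inter>({{l. l y \<in> {0..}} | y. True} \<union> {{l. l y \<in> {0}} | y. y \<notin> \<sigma>}
      \<union> {{l. (\<Sum>y\<in>\<sigma>. l y) \<in> {1}}})"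
    then have l: "\<forall>y. l y \<ge> 0" "\<forall>y. y \<notin> \<sigma> \<longrightarrow> l y = 0" "sum l \<sigma> = 1" by auto
    have sub: "supp l \<subseteq> \<sigma>" using l(2) by (auto simp: supp_def)
    have s1: "sum l (supp l) = 1"
      using sum.mono_neutral_right[OF fin sub, of l] l(3) by (auto simp: supp_def)
    then have "supp l \<noteq> {}" by auto
    then have "is_simplex Y r (supp l)" using assms sub fin unfolding is_simplex_def
      by (meson finite_subset subset_eq)
    then show "l \<in> closed_simplex Y r \<sigma>" unfolding closed_simplex_def vr_carrier_def
      using l(1) s1 sub by auto
  qed
  have proj: "continuous_map ?P euclideanreal (\<lambda>l. l y)" for y
    by (rule continuous_map_product_projection) simp
  have sm: "continuous_map ?P euclideanreal (\<lambda>l. \<Sum>y\<in>\<sigma>. l y)"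
    by (rule continuous_map_sum[OF fin]) (rule proj)
  have pre: "closedin ?P {l. h l \<in> C}" if "continuous_map ?P euclideanreal h" "closed C" for h C
    using closedin_continuous_map_preimage[OF that(1), of C] that(2) by simp
  show ?thesis unfolding eq
    apply (rule closedin_Inter)
     apply blast
    using pre[OF proj, where C="{0..}"] pre[OF proj, where C="{0}"] pre[OF sm, where C="{1}"] by auto
qed

lemma cont_vr:
  assumes cont: "continuous_map X (product_topology (\<lambda>_. euclideanreal) UNIV) g"
    and car: "\<forall>x\<in>topspace X. g x \<in> vr_carrier Y r \<and> supp (g x) \<subseteq> W"
    and fin: "finite W"
  shows "continuous_map X (vr_top Y r) g"
  unfolding continuous_map_def
proof (intro conjI allI impI)
  show "g \<in> topspace X \<rightarrow> topspace (vr_top Y r)" using car by (auto simp: topspace_vr)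
  fix U assume "openin (vr_top Y r) U"
  then have U: "\<And>\<sigma>. is_simplex Y r \<sigma> \<Longrightarrow>
        openin (subtopology (product_topology (\<lambda>_. euclideanreal) UNIV) (closed_simplex Y r \<sigma>))
               (U \<inter> closed_simplex Y r \<sigma>)"
    by (auto simp: openin_vr vr_open_def)
  define \<Sigma> where "\<Sigma> = {\<sigma>. \<sigma> \<subseteq> W \<and> is_simplex Y r \<sigma>}"
  have finS: "finite \<Sigma>" unfolding \<Sigma>_def using fin by (rule finite_subset[rotated, OF finite_Pow_iff[THEN iffD2]]) auto
  define Cl where "Cl \<sigma> = {x \<in> topspace X. g x \<in> closed_simplex Y r \<sigma> - U}" for \<sigma>
  have clo: "closedin X (Cl \<sigma>)" if "\<sigma> \<in> \<Sigma>" for \<sigma>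
  proof -
    have s: "is_simplex Y r \<sigma>" using that by (auto simp: \<Sigma>_def)
    obtain T where T: "openin (product_topology (\<lambda>_. euclideanreal) UNIV) T"
      "U \<inter> closed_simplex Y r \<sigma> = T \<inter> closed_simplex Y r \<sigma>"
      using U[OF s] by (auto simp: openin_subtopology)
    have "closed_simplex Y r \<sigma> - U = closed_simplex Y r \<sigma> - T" using T(2) by blast
    moreover have "closedin (product_topology (\<lambda>_. euclideanreal) UNIV) (closed_simplex Y r \<sigma> - T)"
      by (rule closedin_diff[OF cs_closed[OF s] T(1)])
    ultimately show ?thesis unfolding Cl_def
      using closedin_continuous_map_preimage[OF cont] by metis
  qed
  have eq: "{x \<in> topspace X. g x \<in> U} = topspace X - \<Union>(Cl ` \<Sigma>)"
  proof (rule set_eqI, rule iffI)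
    fix x assume "x \<in> {x \<in> topspace X. g x \<in> U}"
    then show "x \<in> topspace X - \<Union>(Cl ` \<Sigma>)" by (auto simp: Cl_def)
  next
    fix x assume x: "x \<in> topspace X - \<Union>(Cl ` \<Sigma>)"
    then have gx: "g x \<in> vr_carrier Y r" "supp (g x) \<subseteq> W" using car by auto
    then have "supp (g x) \<in> \<Sigma>" by (auto simp: \<Sigma>_def vr_carrier_def)
    moreover have "g x \<in> closed_simplex Y r (supp (g x))" using gx by (auto simp: closed_simplex_def)
    ultimately show "x \<in> {x \<in> topspace X. g x \<in> U}" using x by (auto simp: Cl_def)
  qed
  show "openin X {x \<in> topspace X. g x \<in> U}" unfolding eq
    by (intro openin_diff openin_topspace closedin_Union) (use finS clo in auto)
qed



lemma Phi_swap: "Phi f (b, a) = - Phi f (a, b)"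
proof -
  have e: "f b - f a = - (f a - f b)" by simp
  show ?thesis unfolding Phi_def fst_conv snd_conv e norm_minus_cancel scaleR_minus_right ..
qed

lemma Phi_norm: "f a \<noteq> f b \<Longrightarrow> norm (Phi f (a, b)) = 1"
  unfolding Phi_def by simp

lemma dist_neg: "dist (- x) p = dist x (- (p::'a::real_normed_vector))"
proof -
  have "- x - p = - (x - - p)" by simp
  then show ?thesis by (simp only: dist_norm norm_minus_cancel)
qed

lemma main_construction:
  fixes f :: "'a::euclidean_space \<Rightarrow> 'b::euclidean_space" and \<delta> :: real
  assumes inj: "inj_on f (sphere 0 1)"
   and loc: "\<forall>x\<in>sphere 0 1. \<exists>V. open V \<and> x \<in> V \<and> (\<forall>p\<in>sphere 0 1 \<inter> V. \<forall>q\<in>sphere 0 1 \<inter> V.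
              sdist (Phi f (p, -p)) (Phi f (q, -q)) \<le> \<delta>)"
  shows "\<exists>g. continuous_map (subtopology euclidean (sphere (0::'a) 1)) (vr_top (sphere (0::'b) 1) \<delta>) g
           \<and> (\<forall>x\<in>sphere 0 1. g (- x) = vr_antipode (g x))"
proof -
  define S where "S = sphere (0::'a) 1"
  define h where "h p = Phi f (p, -p)" for p
  define Gs where "Gs = {V. open V \<and> (\<forall>p\<in>S \<inter> V. \<forall>q\<in>S \<inter> V. sdist (h p) (h q) \<le> \<delta>)}"
  have cov: "S \<subseteq> \<Union>Gs" using loc unfolding Gs_def S_def h_def by blast
  obtain e where e: "e > 0" "\<And>x. x \<in> S \<Longrightarrow> \<exists>G\<in>Gs. ball x e \<subseteq> G"
    using Heine_Borel_lemma[OF _ cov] compact_sphere unfolding S_def Gs_def by blast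
  have close: "sdist (h p) (h q) \<le> \<delta>" if hyp: "x \<in> S" "p \<in> S" "q \<in> S" "dist x p < e" "dist x q < e" for x p q
  proof -
    obtain G where "G \<in> Gs" "ball x e \<subseteq> G" using e(2)[OF hyp(1)] by blast
    moreover have "p \<in> G" "q \<in> G" using hyp \<open>ball x e \<subseteq> G\<close> by auto
    ultimately show ?thesis using hyp unfolding Gs_def by blast
  qed
  define r where "r = e / 2"
  have r: "r > 0" "r < e" using e unfolding r_def by auto
  obtain C where C: "C \<subseteq> S" "finite C" "S \<subseteq> \<Union>((\<lambda>c. ball c r) ` C)"
  proof (rule compactE_image[of S S "\<lambda>c. ball c r"])
    show "compact S" unfolding S_def by simp
    show "S \<subseteq> \<Union> ((\<lambda>c. ball c r) ` S)" using r(1) by auto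
  qed auto
  define P where "P = C \<union> uminus ` C"
  have finP: "finite P" using C unfolding P_def by auto
  have PS: "P \<subseteq> S" using C unfolding P_def S_def by auto
  have symP: "- p \<in> P" if "p \<in> P" for p using that unfolding P_def by auto
  have imP: "uminus ` P = P"
  proof
    show "uminus ` P \<subseteq> P" using symP by auto
    show "P \<subseteq> uminus ` P" using symP by (metis image_eqI minus_minus subsetI)
  qed
  have h_neg: "h (- p) = - h p" for p unfolding h_def using Phi_swap by simp
  have h_norm: "norm (h p) = 1" if "p \<in> S" for p
  proof -
    have "p \<noteq> 0" using that unfolding S_def by auto
    have "p \<noteq> - p"
    proof
      assume "p = - p"
      then have "2 *\<^sub>R p = 0" by (metis add.right_inverse scaleR_2)
      then show False using \<open>p \<noteq> 0\<close> by simp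
    qed
    moreover have "- p \<in> S" using that unfolding S_def by simp
    ultimately have "f p \<noteq> f (- p)" using inj that unfolding S_def inj_on_def by blast
    then show ?thesis unfolding h_def by (rule Phi_norm)
  qed
  define \<phi> where "\<phi> p x = max 0 (r - dist x p)" for p x :: 'a
  define N where "N x = (\<Sum>p\<in>P. \<phi> p x)" for x
  define g where "g x = (\<lambda>v. (\<Sum>p\<in>{p\<in>P. h p = v}. \<phi> p x) / N x)" for x
  have phi_nn: "\<phi> p x \<ge> 0" for p x unfolding \<phi>_def by simp
  have phi_pos: "\<phi> p x \<noteq> 0 \<longleftrightarrow> dist x p < r" for p x unfolding \<phi>_def by auto
  have Npos: "N x > 0" if xS: "x \<in> S" for x
  proof -
    obtain c where c: "c \<in> C" "x \<in> ball c r" using C(3) xS by blast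
    then have "\<phi> c x > 0" unfolding \<phi>_def by (simp add: dist_commute)
    also have "\<phi> c x \<le> N x" unfolding N_def
      by (rule member_le_sum) (use c finP phi_nn in \<open>auto simp: P_def\<close>)
    finally show ?thesis .
  qed
  have phi_neg: "\<phi> p (- x) = \<phi> (- p) x" for p x unfolding \<phi>_def by (simp add: dist_neg)
  have N_neg: "N (- x) = N x" for x
  proof -
    have "N (- x) = (\<Sum>p\<in>P. \<phi> (- p) x)" unfolding N_def phi_neg ..
    also have "\<dots> = (\<Sum>q\<in>uminus ` P. \<phi> q x)"
      by (subst sum.reindex) (auto simp: inj_on_def)
    finally show ?thesis unfolding imP N_def .
  qed
  have equiv: "g (- x) = vr_antipode (g x)" for x
  proof
    fix v
    have set_eq: "{q\<in>P. h q = - v} = uminus ` {p\<in>P. h p = v}"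
    proof
      show "{q\<in>P. h q = - v} \<subseteq> uminus ` {p\<in>P. h p = v}"
      proof
        fix q assume q: "q \<in> {q\<in>P. h q = - v}"
        then have "- q \<in> {p\<in>P. h p = v}" using symP h_neg by auto
        then show "q \<in> uminus ` {p\<in>P. h p = v}" by (metis image_eqI minus_minus)
      qed
      show "uminus ` {p\<in>P. h p = v} \<subseteq> {q\<in>P. h q = - v}" using symP h_neg by auto
    qed
    have "(\<Sum>q\<in>{q\<in>P. h q = - v}. \<phi> q x) = (\<Sum>p\<in>{p\<in>P. h p = v}. \<phi> (- p) x)"
      unfolding set_eq by (subst sum.reindex) (auto simp: inj_on_def)
    then show "g (- x) v = vr_antipode (g x) v"
      unfolding g_def vr_antipode_def N_neg phi_neg by simp
  qed
  have supp_eq: "supp (g x) = h ` {p\<in>P. dist x p < r}" if xS: "x \<in> S" for x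
  proof -
    have "v \<in> supp (g x) \<longleftrightarrow> (\<exists>p\<in>P. h p = v \<and> dist x p < r)" for v
    proof -
      have "v \<in> supp (g x) \<longleftrightarrow> (\<Sum>p\<in>{p\<in>P. h p = v}. \<phi> p x) \<noteq> 0"
        unfolding supp_def g_def using Npos[OF xS] by simp
      also have "\<dots> \<longleftrightarrow> (\<exists>p\<in>{p\<in>P. h p = v}. \<phi> p x \<noteq> 0)"
        using sum_nonneg_eq_0_iff[of "{p\<in>P. h p = v}" "\<lambda>p. \<phi> p x"] finP phi_nn by auto
      finally show ?thesis using phi_pos by auto
    qed
    then show ?thesis by auto
  qed
  have carrier: "g x \<in> vr_carrier (sphere 0 1) \<delta> \<and> supp (g x) \<subseteq> h ` P" if x: "x \<in> S" for x
  proof -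
    have nn: "\<forall>v. g x v \<ge> 0" unfolding g_def using Npos[OF x] phi_nn
      by (auto intro!: divide_nonneg_pos sum_nonneg)
    have sub: "supp (g x) \<subseteq> h ` P" unfolding supp_eq[OF x] by auto
    obtain c where c: "c \<in> C" "x \<in> ball c r" using C(3) x by blast
    have ne: "supp (g x) \<noteq> {}" unfolding supp_eq[OF x] using c by (auto simp: P_def dist_commute)
    have fin: "finite (supp (g x))" using sub finP finite_subset by blast
    have sph: "supp (g x) \<subseteq> sphere 0 1" unfolding supp_eq[OF x] using h_norm PS by auto
    have pw: "\<forall>u\<in>supp (g x). \<forall>v\<in>supp (g x). sdist u v \<le> \<delta>"
      unfolding supp_eq[OF x]
    proof (intro ballI)
      fix u v assume "u \<in> h ` {p \<in> P. dist x p < r}" "v \<in> h ` {p \<in> P. dist x p < r}"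
      then obtain p q where "p \<in> P" "q \<in> P" "dist x p < r" "dist x q < r" "u = h p" "v = h q" by auto
      then show "sdist u v \<le> \<delta>" using close[OF x, of p q] PS r by auto
    qed
    have "sum (g x) (supp (g x)) = sum (g x) (h ` P)"
      by (rule sum.mono_neutral_left) (use finP sub in \<open>auto simp: supp_def\<close>)
    also have "\<dots> = (\<Sum>v\<in>h ` P. (\<Sum>p\<in>{p\<in>P. h p = v}. \<phi> p x)) / N x"
      unfolding g_def by (simp add: sum_divide_distrib)
    also have "\<dots> = N x / N x" unfolding N_def by (simp add: sum.image_gen[OF finP, symmetric])
    also have "\<dots> = 1" using Npos[OF x] by simp
    finally have s1: "sum (g x) (supp (g x)) = 1" .
    show ?thesis unfolding vr_carrier_def is_simplex_def using nn sub ne fin sph pw s1 by auto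
  qed
  have contp: "continuous_map (subtopology euclidean S) (product_topology (\<lambda>_. euclideanreal) UNIV) g"
    unfolding continuous_map_componentwise_UNIV
  proof
    fix v
    have "continuous_on S (\<lambda>x. g x v)" unfolding g_def N_def \<phi>_def
      by (intro continuous_intros) (use Npos in \<open>fastforce simp: N_def \<phi>_def\<close>)
    then show "continuous_map (top_of_set S) euclideanreal (\<lambda>x. g x v)"
      by (simp add: continuous_map_iff_continuous)
  qed
  have "continuous_map (subtopology euclidean S) (vr_top (sphere (0::'b) 1) \<delta>) g"
    by (rule cont_vr[OF contp, where W="h ` P"]) (use carrier finP in auto)
  then show ?thesis using equiv unfolding S_def by blast
qed



lemma c_le:
  fixes f :: "'a::euclidean_space \<Rightarrow> 'b::euclidean_space" and \<delta> :: real
  assumes inj: "inj_on f (sphere 0 1)" and d0: "\<delta> \<ge> 0"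
   and loc: "\<forall>x\<in>sphere 0 1. \<exists>V. open V \<and> x \<in> V \<and> (\<forall>p\<in>sphere 0 1 \<inter> V. \<forall>q\<in>sphere 0 1 \<inter> V.
              sdist (Phi f (p, -p)) (Phi f (q, -q)) \<le> \<delta>)"
  shows "c_VR (sphere (0::'a) 1) (sphere (0::'b) 1) \<le> \<delta>"
  unfolding c_VR_def
proof (rule cInf_lower)
  show "\<delta> \<in> {r. 0 \<le> r \<and> (\<exists>g. continuous_map (top_of_set (sphere (0::'a) 1)) (vr_top (sphere (0::'b) 1) r) g \<and>
                  (\<forall>x\<in>sphere 0 1. g (- x) = vr_antipode (g x)))}"
    using main_construction[OF inj loc] d0 by blast
  show "bdd_below {r. 0 \<le> r \<and> (\<exists>g. continuous_map (top_of_set (sphere (0::'a) 1)) (vr_top (sphere (0::'b) 1) r) g \<and>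
                  (\<forall>x\<in>sphere 0 1. g (- x) = vr_antipode (g x)))}"
    by (rule bdd_belowI[of _ 0]) auto
qed

lemma topspace_conf2: "topspace (conf2 X) = {p. fst p \<in> topspace X \<and> snd p \<in> topspace X \<and> fst p \<noteq> snd p}"
  unfolding conf2_def by (auto simp: topspace_prod_topology)

lemma alpha_ge:
  fixes f :: "'a::euclidean_space \<Rightarrow> 'b::euclidean_space" and X :: "'a topology"
  assumes cont: "continuous_map (top_of_set (sphere 0 1)) (conf2 X) (\<lambda>y. (y, -y))"
   and injS: "inj_on f (sphere 0 1)" and injX: "inj_on f (topspace X)"
  shows "c_VR (sphere (0::'a) 1) (sphere (0::'b) 1) \<le> alpha X f"
  unfolding alpha_def modulus_def
proof (rule cInf_greatest)
  let ?T = "topspace (conf2 X)"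
  have unit: "norm (Phi f u) = 1" if "u \<in> ?T" for u
  proof -
    have "f (fst u) \<noteq> f (snd u)" using that injX unfolding topspace_conf2 inj_on_def by auto
    then show ?thesis using Phi_norm[of f "fst u" "snd u"] by simp
  qed
  have "sdist (Phi f u) (Phi f v) \<le> pi" if "u \<in> ?T" "v \<in> ?T" for u v
  proof -
    have "\<bar>Phi f u \<bullet> Phi f v\<bar> \<le> norm (Phi f u) * norm (Phi f v)" by (rule Cauchy_Schwarz_ineq2)
    then have "\<bar>Phi f u \<bullet> Phi f v\<bar> \<le> 1" using unit that by simp
    then show ?thesis unfolding sdist_def by (intro arccos_ubound) auto
  qed
  then have "pi \<in> {\<delta>. \<delta> \<ge> 0 \<and> (\<forall>x\<in>?T. \<exists>U. openin (conf2 X) U \<and> x \<in> U \<and>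
       (\<forall>u\<in>U. \<forall>v\<in>U. sdist (Phi f u) (Phi f v) \<le> \<delta>))}"
    by (auto intro!: exI[of _ ?T])
  then show "{\<delta>. \<delta> \<ge> 0 \<and> (\<forall>x\<in>?T. \<exists>U. openin (conf2 X) U \<and> x \<in> U \<and>
       (\<forall>u\<in>U. \<forall>v\<in>U. sdist (Phi f u) (Phi f v) \<le> \<delta>))} \<noteq> {}" by blast
next
  fix \<delta> assume "\<delta> \<in> {\<delta>. \<delta> \<ge> 0 \<and> (\<forall>x\<in>topspace (conf2 X). \<exists>U. openin (conf2 X) U \<and> x \<in> U \<and>
       (\<forall>u\<in>U. \<forall>v\<in>U. sdist (Phi f u) (Phi f v) \<le> \<delta>))}"
  then have d0: "\<delta> \<ge> 0" and dU: "\<And>x. x \<in> topspace (conf2 X) \<Longrightarrow> \<exists>U. openin (conf2 X) U \<and> x \<in> U \<and>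
       (\<forall>u\<in>U. \<forall>v\<in>U. sdist (Phi f u) (Phi f v) \<le> \<delta>)" by auto
  show "c_VR (sphere (0::'a) 1) (sphere (0::'b) 1) \<le> \<delta>"
  proof (rule c_le[OF injS d0], intro ballI)
    fix x :: 'a assume x: "x \<in> sphere 0 1"
    have "(x, -x) \<in> topspace (conf2 X)" using cont x unfolding continuous_map_def by auto
    then obtain U where U: "openin (conf2 X) U" "(x, -x) \<in> U"
      "\<forall>u\<in>U. \<forall>v\<in>U. sdist (Phi f u) (Phi f v) \<le> \<delta>" using dU by blast
    have "openin (top_of_set (sphere 0 1)) {y \<in> topspace (top_of_set (sphere 0 1)). (y, -y) \<in> U}"
      by (rule openin_continuous_map_preimage[OF cont U(1)])
    then obtain V where V: "open V" "{y \<in> sphere 0 1. (y, -y) \<in> U} = sphere 0 1 \<inter> V"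
      by (auto simp: openin_open)
    show "\<exists>V. open V \<and> x \<in> V \<and> (\<forall>p\<in>sphere 0 1 \<inter> V. \<forall>q\<in>sphere 0 1 \<inter> V.
              sdist (Phi f (p, -p)) (Phi f (q, -q)) \<le> \<delta>)"
    proof (intro exI conjI)
      show "open V" by fact
      show "x \<in> V" using V(2) x U(2) by blast
      show "\<forall>p\<in>sphere 0 1 \<inter> V. \<forall>q\<in>sphere 0 1 \<inter> V. sdist (Phi f (p, -p)) (Phi f (q, -q)) \<le> \<delta>"
        using V(2) U(3) by blast
    qed
  qed
qed

lemma cont_eu: "continuous_map (top_of_set (sphere (0::'a::euclidean_space) 1)) (conf2 euclidean) (\<lambda>y. (y, -y))"
  unfolding conf2_def
proof (rule continuous_map_into_subtopology)
  show "continuous_map (top_of_set (sphere (0::'a) 1)) (prod_topology euclidean euclidean) (\<lambda>y. (y, - y))"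
    unfolding continuous_map_paired
    by (simp add: continuous_map_iff_continuous continuous_on_id continuous_on_minus)
  show "(\<lambda>y. (y, - y)) \<in> topspace (top_of_set (sphere (0::'a) 1)) \<rightarrow> {p. fst p \<in> topspace euclidean \<and> snd p \<in> topspace euclidean \<and> fst p \<noteq> snd p}"
  proof
    fix y :: 'a assume "y \<in> topspace (top_of_set (sphere 0 1))"
    then have "y \<noteq> 0" by auto
    then have "y \<noteq> - y" by (metis add.right_inverse scaleR_2 scaleR_eq_0_iff zero_neq_numeral)
    then show "(y, - y) \<in> {p. fst p \<in> topspace euclidean \<and> snd p \<in> topspace euclidean \<and> fst p \<noteq> snd p}" by simp
  qed
qed

lemma cont_sph: "continuous_map (top_of_set (sphere (0::'a::euclidean_space) 1)) (conf2 (top_of_set (sphere 0 1))) (\<lambda>y. (y, -y))"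
  unfolding conf2_def
proof (rule continuous_map_into_subtopology)
  have c1: "continuous_map (top_of_set (sphere (0::'a) 1)) (top_of_set (sphere 0 1)) (\<lambda>y. y)" by simp
  have c2: "continuous_map (top_of_set (sphere (0::'a) 1)) (top_of_set (sphere 0 1)) (\<lambda>y. - y)"
    by (rule continuous_map_into_subtopology)
       (auto simp: continuous_map_iff_continuous continuous_on_minus continuous_on_id)
  show "continuous_map (top_of_set (sphere (0::'a) 1)) (prod_topology (top_of_set (sphere 0 1)) (top_of_set (sphere 0 1))) (\<lambda>y. (y, - y))"
    unfolding continuous_map_paired using c1 c2 by blast
  show "(\<lambda>y. (y, - y)) \<in> topspace (top_of_set (sphere 0 1)) \<rightarrow> {p. fst p \<in> topspace (top_of_set (sphere (0::'a) 1)) \<and> snd p \<in> topspace (top_of_set (sphere 0 1)) \<and> fst p \<noteq> snd p}"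
  proof
    fix y :: 'a assume "y \<in> topspace (top_of_set (sphere 0 1))"
    then have y: "y \<in> sphere 0 1" "y \<noteq> 0" by auto
    then have "y \<noteq> - y" by (metis add.right_inverse scaleR_2 scaleR_eq_0_iff zero_neq_numeral)
    then show "(y, - y) \<in> {p. fst p \<in> topspace (top_of_set (sphere (0::'a) 1)) \<and> snd p \<in> topspace (top_of_set (sphere 0 1)) \<and> fst p \<noteq> snd p}" using y by simp
  qed
qed

theorem corollary3p6:
  fixes k d :: nat
  assumes "DIM('a::euclidean_space) = k + 1"
    and "DIM('b::euclidean_space) = d"
    and "d \<ge> 1" and "k \<ge> d - 1"
  shows "(\<forall>f :: 'a \<Rightarrow> 'b. inj f \<longrightarrow>
            alpha euclidean f \<ge> c_VR (sphere (0::'a) 1) (sphere (0::'b) 1))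
       \<and> (\<forall>f :: 'a \<Rightarrow> 'b. inj_on f (sphere 0 1) \<longrightarrow>
            alpha (subtopology euclidean (sphere 0 1)) f \<ge> c_VR (sphere (0::'a) 1) (sphere (0::'b) 1))"
proof (intro conjI allI impI)
  fix f :: "'a \<Rightarrow> 'b" assume "inj f"
  then show "alpha euclidean f \<ge> c_VR (sphere (0::'a) 1) (sphere (0::'b) 1)"
    by (intro alpha_ge[OF cont_eu]) (auto intro: inj_on_subset)
next
  fix f :: "'a \<Rightarrow> 'b" assume "inj_on f (sphere 0 1)"
  then show "alpha (subtopology euclidean (sphere 0 1)) f \<ge> c_VR (sphere (0::'a) 1) (sphere (0::'b) 1)"
    by (intro alpha_ge[OF cont_sph]) auto
qed

end
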